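(* Consider the sequential decision problem described in the context. (1) Given $\mathbf q=(q_1,\dots,q_T)\in\mathcal Q_B$, let $f_t(y^{t-1})=q_t(\cdot\mid\cdot,\cdot,y^{t-1})$; then $\tilde L_T(\mathbf f)=L_T(\mathbf q)$. (2) Given a decision policy $\mathbf f=(f_1,\dots,f_T)$, let $\mathbf q\in\mathcal Q_B$ be $q_t(y_t\mid x_t,s_t,y^{t-1})=a_t(y_t\mid x_t,s_t)$ with $a_t=f_t(y^{t-1})$; then $L_T(\mathbf q)=\tilde L_T(\mathbf f)$. Hence the sequential problem is equivalent to minimizing $L_T$ over $\mathcal Q_B$.
   Context: Let $\mathcal X=\{0,\dots,m_x\}$, $\mathcal Y=\{0,\dots,m_y\}$, $\mathcal S=\{0,\dots,m_s\}$ with $m_x\le m_y$. The demand $\{X_t\}$ is a time-homogeneous first-order Markov chain on $\mathcal X$ with transition matrix $Q$ and initial pmf $P_{X_1}$; $S_1\sim P_{S_1}$ independent of $\{X_t\}$. For an integer $w$ let $\mathcal Y_\circ(w)=\{y\in\mathcal Y:w+y\in\mathcal S\}$. $\mathcal Q_B$ is the set of charging policies $q_t(y\mid x_t,s_t,y^{t-1})$ (conditional pmfs on $\mathcal Y$ with $q_t(\mathcal Y_\circ(s_t-x_t)\mid x_t,s_t,y^{t-1})=1$), inducing $Y_t\sim q_t(\cdot\mid X_t,S_t,Y^{t-1})$, $S_{t+1}=S_t+Y_t-X_t$, and $L_T(\mathbf q)=\frac1TI^{\mathbf q}(X^T,S_1;Y^T)$. $\mathcal A$ is the set of conditional pmfs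 $a(y\mid x,s)$ with $a(\mathcal Y_\circ(s-x)\mid x,s)=1$ for all $(x,s)$. Sequential problem: a decision maker observes $Y^{t-1}$ and chooses $A_t=f_t(Y^{t-1})\in\mathcal A$; then $Y_t\sim A_t(\cdot\mid X_t,S_t)$ and $S_{t+1}=S_t+Y_t-X_t$. The per-step cost is $c_t(x_t,s_t,a_t,y^t;\mathbf f)=\log\frac{a_t(y_t\mid x_t,s_t)}{P^{\mathbf f}(Y_t=y_t\mid Y^{t-1}=y^{t-1})}$ and $\tilde L_T(\mathbf f)=\frac1T\mathbb E^{\mathbf f}\big[\sum_{t=1}^Tc_t(X_t,S_t,A_t,Y^t;\mathbf f)\big]$. *)

theory Defs
  imports Complex_Main
begin

text \<open>Alphabets: X = {0..mx}, Y = {0..my}, S = {0..ms}, all encoded as nat.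
  Time is indexed from 0 (Isabelle index t corresponds to the paper's t+1).
  A trajectory is a triple (xs, s1, ys) with xs = X^T, ys = Y^T (lists of length T).\<close>

definition Yo :: "nat \<Rightarrow> nat \<Rightarrow> int \<Rightarrow> nat set" where
  "Yo my ms w = {y. y \<le> my \<and> 0 \<le> w + int y \<and> w + int y \<le> int ms}"

definition in_A :: "nat \<Rightarrow> nat \<Rightarrow> nat \<Rightarrow> (nat \<Rightarrow> nat \<Rightarrow> nat \<Rightarrow> real) \<Rightarrow> bool" where
  "in_A mx my ms a \<longleftrightarrow>
     (\<forall>x\<le>mx. \<forall>s\<le>ms. (\<forall>y. 0 \<le> a x s y) \<and> (\<Sum>y\<le>my. a x s y) = 1 \<and>
        (\<forall>y. y \<notin> Yo my ms (int s - int x) \<longrightarrow> a x s y = 0))"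

text \<open>Charging policies q = (q_t): q t x s ys y = q_t(y | x, s, y^{t-1} = ys).\<close>
definition in_Q_B :: "nat \<Rightarrow> nat \<Rightarrow> nat \<Rightarrow> nat \<Rightarrow>
    (nat \<Rightarrow> nat \<Rightarrow> nat \<Rightarrow> nat list \<Rightarrow> nat \<Rightarrow> real) \<Rightarrow> bool" where
  "in_Q_B mx my ms T q \<longleftrightarrow>
     (\<forall>t<T. \<forall>ys. length ys = t \<and> set ys \<subseteq> {..my} \<longrightarrow>
        in_A mx my ms (\<lambda>x s y. q t x s ys y))"

definition is_decision_policy :: "nat \<Rightarrow> nat \<Rightarrow> nat \<Rightarrow> nat \<Rightarrow>
    (nat \<Rightarrow> nat list \<Rightarrow> (nat \<Rightarrow> nat \<Rightarrow> nat \<Rightarrow> real)) \<Rightarrow> bool" where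
  "is_decision_policy mx my ms T f \<longleftrightarrow>
     (\<forall>t<T. \<forall>ys. length ys = t \<and> set ys \<subseteq> {..my} \<longrightarrow> in_A mx my ms (f t ys))"

definition is_pmf_on :: "nat \<Rightarrow> (nat \<Rightarrow> real) \<Rightarrow> bool" where
  "is_pmf_on m p \<longleftrightarrow> (\<forall>z. 0 \<le> p z) \<and> (\<forall>z>m. p z = 0) \<and> (\<Sum>z\<le>m. p z) = 1"

definition is_stochastic :: "nat \<Rightarrow> (nat \<Rightarrow> nat \<Rightarrow> real) \<Rightarrow> bool" where
  "is_stochastic m Q \<longleftrightarrow> (\<forall>x\<le>m. is_pmf_on m (Q x))"

text \<open>Battery state S_{t}: S_{t+1} = S_t + Y_t - X_t (with positive probability this stays in S,
  so the truncated nat subtraction is never active on the support).\<close>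
fun state :: "nat \<Rightarrow> nat list \<Rightarrow> nat list \<Rightarrow> nat \<Rightarrow> nat" where
  "state s1 xs ys 0 = s1"
| "state s1 xs ys (Suc t) = state s1 xs ys t + ys ! t - xs ! t"

definition Omega :: "nat \<Rightarrow> nat \<Rightarrow> nat \<Rightarrow> nat \<Rightarrow> (nat list \<times> nat \<times> nat list) set" where
  "Omega mx my ms T = {(xs, s1, ys). length xs = T \<and> set xs \<subseteq> {..mx} \<and> s1 \<le> ms \<and>
                        length ys = T \<and> set ys \<subseteq> {..my}}"

text \<open>Joint pmf of (X^T, S_1, Y^T) when at time t, given Y^{t-1} = ys, the output is drawn
  from the kernel K t ys (arguments x s y).\<close>
definition joint :: "(nat \<Rightarrow> nat \<Rightarrow> real) \<Rightarrow> (nat \<Rightarrow> real) \<Rightarrow> (nat \<Rightarrow> real) \<Rightarrow> nat \<Rightarrow>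
    (nat \<Rightarrow> nat list \<Rightarrow> nat \<Rightarrow> nat \<Rightarrow> nat \<Rightarrow> real) \<Rightarrow> nat list \<times> nat \<times> nat list \<Rightarrow> real" where
  "joint Q PX1 PS1 T K = (\<lambda>(xs, s1, ys).
     PS1 s1 * PX1 (xs ! 0) * (\<Prod>t\<in>{1..<T}. Q (xs ! (t - 1)) (xs ! t)) *
     (\<Prod>t<T. K t (take t ys) (xs ! t) (state s1 xs ys t) (ys ! t)))"

definition jointQ where
  "jointQ Q PX1 PS1 T q = joint Q PX1 PS1 T (\<lambda>t ys x s y. q t x s ys y)"

definition jointF where
  "jointF Q PX1 PS1 T f = joint Q PX1 PS1 T f"

text \<open>Discrete mutual information I(X^T,S_1;Y^T) (natural log; 0 log 0 = 0 automatic).\<close>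
definition mutual_info_XS_Y :: "nat \<Rightarrow> nat \<Rightarrow> nat \<Rightarrow> nat \<Rightarrow>
    (nat list \<times> nat \<times> nat list \<Rightarrow> real) \<Rightarrow> real" where
  "mutual_info_XS_Y mx my ms T p =
     (\<Sum>\<omega>\<in>Omega mx my ms T.
        let pXS = (\<Sum>\<omega>'\<in>Omega mx my ms T.
                     if fst \<omega>' = fst \<omega> \<and> fst (snd \<omega>') = fst (snd \<omega>) then p \<omega>' else 0);
            pY = (\<Sum>\<omega>'\<in>Omega mx my ms T. if snd (snd \<omega>') = snd (snd \<omega>) then p \<omega>' else 0)
        in p \<omega> * ln (p \<omega> / (pXS * pY)))"

definition L_T where
  "L_T mx my ms Q PX1 PS1 T q = (1 / real T) * mutual_info_XS_Y mx my ms T (jointQ Q PX1 PS1 T q)"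

definition PY_prefix where
  "PY_prefix mx my ms Q PX1 PS1 T f t yt =
     (\<Sum>\<omega>\<in>Omega mx my ms T. if take t (snd (snd \<omega>)) = yt then jointF Q PX1 PS1 T f \<omega> else 0)"

definition cost where
  "cost mx my ms Q PX1 PS1 T f t = (\<lambda>(xs, s1, ys).
     ln (f t (take t ys) (xs ! t) (state s1 xs ys t) (ys ! t) /
         (PY_prefix mx my ms Q PX1 PS1 T f (Suc t) (take (Suc t) ys) /
          PY_prefix mx my ms Q PX1 PS1 T f t (take t ys))))"

definition tilde_L_T where
  "tilde_L_T mx my ms Q PX1 PS1 T f =
     (1 / real T) * (\<Sum>\<omega>\<in>Omega mx my ms T.
        jointF Q PX1 PS1 T f \<omega> * (\<Sum>t<T. cost mx my ms Q PX1 PS1 T f t \<omega>))"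

end

theory Submission imports Defs begin
definition LS :: "nat \<Rightarrow> nat \<Rightarrow> nat list set" where
 "LS m n = {xs. length xs = n \<and> set xs \<subseteq> {..m}}"

lemma finite_LS[simp]: "finite (LS m n)"
proof -
  have "LS m n \<subseteq> {xs. set xs \<subseteq> {..m} \<and> length xs = n}" unfolding LS_def by auto
  thus ?thesis using finite_lists_length_eq[of "{..m}" n] by (auto intro: finite_subset)
qed

lemma LS_Suc: "LS m (Suc n) = (\<lambda>(xs,y). xs @ [y]) ` (LS m n \<times> {..m})"
proof
  show "LS m (Suc n) \<subseteq> (\<lambda>(xs,y). xs @ [y]) ` (LS m n \<times> {..m})"
  proof
    fix zs assume z: "zs \<in> LS m (Suc n)"
    then have len: "length zs = Suc n" and st: "set zs \<subseteq> {..m}" by (auto simp: LS_def)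
    define xs where "xs = butlast zs"
    define y where "y = last zs"
    have zs: "zs = xs @ [y]" using len unfolding xs_def y_def
      by (intro append_butlast_last_id[symmetric]) auto
    have "(xs, y) \<in> LS m n \<times> {..m}" using len st unfolding zs LS_def by auto
    then show "zs \<in> (\<lambda>(xs,y). xs @ [y]) ` (LS m n \<times> {..m})"
      using zs by (intro image_eqI[where x="(xs,y)"]) auto
  qed
next
  show "(\<lambda>(xs,y). xs @ [y]) ` (LS m n \<times> {..m}) \<subseteq> LS m (Suc n)"
  proof
    fix zs assume "zs \<in> (\<lambda>(xs,y). xs @ [y]) ` (LS m n \<times> {..m})"
    then obtain xs y where "zs = xs @ [y]" "xs \<in> LS m n" "y \<le> m" by auto
    then show "zs \<in> LS m (Suc n)" unfolding LS_def by simp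
  qed
qed

lemma sum_LS_Suc: "(\<Sum>zs\<in>LS m (Suc n). F zs) = (\<Sum>xs\<in>LS m n. \<Sum>y\<le>m. F (xs @ [y]))"
proof -
  have inj: "inj_on (\<lambda>(xs,y). xs @ [y]) (LS m n \<times> {..m})"
    by (auto simp: inj_on_def)
  have "(\<Sum>zs\<in>LS m (Suc n). F zs) = (\<Sum>p\<in>LS m n \<times> {..m}. F (fst p @ [snd p]))"
    unfolding LS_Suc sum.reindex[OF inj] by (intro sum.cong refl) (auto simp: split_beta)
  also have "\<dots> = (\<Sum>xs\<in>LS m n. \<Sum>y\<le>m. F (xs @ [y]))"
    by (simp add: sum.cartesian_product split_beta)
  finally show ?thesis .
qed

lemma LS_nth: "xs \<in> LS m T \<Longrightarrow> n < T \<Longrightarrow> xs ! n \<le> m"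
proof -
  assume a: "xs \<in> LS m T" "n < T"
  then have "xs ! n \<in> set xs" by (simp add: LS_def)
  then show ?thesis using a(1) unfolding LS_def by auto
qed

lemma LS_0: "LS m 0 = {[]}" by (auto simp: LS_def)

lemma state_append: "t \<le> length ys \<Longrightarrow> state s1 xs (ys @ zs) t = state s1 xs ys t"
  by (induction t) (auto simp: nth_append)

lemma state_take: "t \<le> n \<Longrightarrow> n \<le> length ys \<Longrightarrow> state s1 xs (take n ys) t = state s1 xs ys t"
  by (induction t) auto

definition PK :: "(nat \<Rightarrow> nat list \<Rightarrow> nat \<Rightarrow> nat \<Rightarrow> nat \<Rightarrow> real) \<Rightarrow> nat list \<Rightarrow> nat \<Rightarrow> nat \<Rightarrow> nat list \<Rightarrow> real" where
  "PK K xs s1 n ys = (\<Prod>t<n. K t (take t ys) (xs ! t) (state s1 xs ys t) (ys ! t))"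

context
  fixes mx my ms T :: nat and K :: "nat \<Rightarrow> nat list \<Rightarrow> nat \<Rightarrow> nat \<Rightarrow> nat \<Rightarrow> real"
    and xs :: "nat list" and s1 :: nat
  assumes pol: "is_decision_policy mx my ms T K"
    and xs: "xs \<in> LS mx T" and s1: "s1 \<le> ms"
begin

abbreviation PKl where "PKl \<equiv> PK K xs s1"

lemma PK_prop: "n \<le> T \<Longrightarrow> n \<le> length ys \<Longrightarrow> set ys \<subseteq> {..my} \<Longrightarrow>
   PKl n ys \<ge> 0 \<and> (PKl n ys \<noteq> 0 \<longrightarrow> (\<forall>t\<le>n. state s1 xs ys t \<le> ms))"
proof (induction n)
  case 0 then show ?case using s1 by (simp add: PK_def)
next
  case (Suc n)
  have IH: "PKl n ys \<ge> 0 \<and> (PKl n ys \<noteq> 0 \<longrightarrow> (\<forall>t\<le>n. state s1 xs ys t \<le> ms))"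
    using Suc by auto
  have split: "PKl (Suc n) ys = PKl n ys * K n (take n ys) (xs ! n) (state s1 xs ys n) (ys ! n)"
    by (simp add: PK_def)
  show ?case
  proof (cases "PKl n ys = 0")
    case True then show ?thesis using split by simp
  next
    case False
    then have st: "\<forall>t\<le>n. state s1 xs ys t \<le> ms" using IH by auto
    have A: "in_A mx my ms (K n (take n ys))"
    proof -
      have "length (take n ys) = n" "set (take n ys) \<subseteq> {..my}"
        using Suc.prems set_take_subset[of n ys] by auto
      then show ?thesis using pol Suc.prems unfolding is_decision_policy_def by auto
    qed
    have xn: "xs ! n \<le> mx" using xs Suc.prems LS_nth by auto
    have sn: "state s1 xs ys n \<le> ms" using st by auto
    from A xn sn have nn: "0 \<le> K n (take n ys) (xs ! n) (state s1 xs ys n) (ys ! n)"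
      and yo: "K n (take n ys) (xs ! n) (state s1 xs ys n) (ys ! n) \<noteq> 0 \<Longrightarrow>
          ys ! n \<in> Yo my ms (int (state s1 xs ys n) - int (xs ! n))"
      unfolding in_A_def by blast+
    have "PKl (Suc n) ys \<ge> 0" using split nn IH by simp
    moreover have "PKl (Suc n) ys \<noteq> 0 \<longrightarrow> (\<forall>t\<le>Suc n. state s1 xs ys t \<le> ms)"
    proof
      assume "PKl (Suc n) ys \<noteq> 0"
      then have "ys ! n \<in> Yo my ms (int (state s1 xs ys n) - int (xs ! n))" using split yo by auto
      then have "state s1 xs ys (Suc n) \<le> ms" unfolding Yo_def by auto
      then show "\<forall>t\<le>Suc n. state s1 xs ys t \<le> ms" using st le_Suc_eq by auto
    qed
    ultimately show ?thesis by blast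
  qed
qed

lemma PK_append: "length ys = n \<Longrightarrow> PKl (Suc n) (ys @ [y]) = PKl n ys * K n ys (xs ! n) (state s1 xs ys n) y"
  unfolding PK_def by (simp add: state_append nth_append)

lemma PK_sum: "n \<le> T \<Longrightarrow> (\<Sum>ys\<in>LS my n. PKl n ys) = 1"
proof (induction n)
  case 0 then show ?case by (simp add: LS_0 PK_def)
next
  case (Suc n)
  have "(\<Sum>ys\<in>LS my (Suc n). PKl (Suc n) ys) =
      (\<Sum>ys\<in>LS my n. \<Sum>y\<le>my. PKl n ys * K n ys (xs ! n) (state s1 xs ys n) y)"
    unfolding sum_LS_Suc by (intro sum.cong refl) (simp add: PK_append LS_def)
  also have "\<dots> = (\<Sum>ys\<in>LS my n. PKl n ys)"
  proof (intro sum.cong refl)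
    fix ys assume ys: "ys \<in> LS my n"
    show "(\<Sum>y\<le>my. PKl n ys * K n ys (xs ! n) (state s1 xs ys n) y) = PKl n ys"
    proof (cases "PKl n ys = 0")
      case False
      then have sn: "state s1 xs ys n \<le> ms" using PK_prop[of n ys] Suc.prems ys by (auto simp: LS_def)
      have A: "in_A mx my ms (K n ys)"
        using pol Suc.prems ys unfolding is_decision_policy_def LS_def by auto
      have xn: "xs ! n \<le> mx" using xs Suc.prems LS_nth by auto
      have "(\<Sum>y\<le>my. K n ys (xs ! n) (state s1 xs ys n) y) = 1"
        using A xn sn unfolding in_A_def by blast
      then show ?thesis by (simp add: sum_distrib_left[symmetric])
    qed simp
  qed
  also have "\<dots> = 1" using Suc by simp
  finally show ?case .
qed
end


lemma markov_sum:
  assumes Q: "is_stochastic mx Q" and P: "is_pmf_on mx PX1" and n: "1 \<le> n"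
  shows "(\<Sum>xs\<in>LS mx n. PX1 (xs ! 0) * (\<Prod>t\<in>{1..<n}. Q (xs ! (t - 1)) (xs ! t))) = 1"
  using n
proof (induction n rule: dec_induct)
  case base
  have "LS mx 1 = (\<lambda>x. [x]) ` {..mx}"
  proof
    show "LS mx 1 \<subseteq> (\<lambda>x. [x]) ` {..mx}"
    proof
      fix zs assume "zs \<in> LS mx 1"
      then obtain x where "zs = [x]" "x \<le> mx" unfolding LS_def by (auto simp: length_Suc_conv)
      then show "zs \<in> (\<lambda>x. [x]) ` {..mx}" by auto
    qed
  qed (auto simp: LS_def)
  moreover have "inj_on (\<lambda>x. [x]) {..mx}" by (auto simp: inj_on_def)
  ultimately show ?case using P by (simp add: sum.reindex is_pmf_on_def)
next
  case (step n)
  have "(\<Sum>xs\<in>LS mx (Suc n). PX1 (xs ! 0) * (\<Prod>t\<in>{1..<Suc n}. Q (xs ! (t - 1)) (xs ! t))) =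
     (\<Sum>xs\<in>LS mx n. \<Sum>x\<le>mx. (PX1 (xs ! 0) * (\<Prod>t\<in>{1..<n}. Q (xs ! (t - 1)) (xs ! t))) * Q (xs ! (n - 1)) x)"
    unfolding sum_LS_Suc
  proof (intro sum.cong refl)
    fix xs x assume xs: "xs \<in> LS mx n"
    then have len: "length xs = n" by (simp add: LS_def)
    have ins: "{1..<Suc n} = insert n {1..<n}" using step by auto
    have pr: "(\<Prod>t\<in>{1..<n}. Q ((xs @ [x]) ! (t - 1)) ((xs @ [x]) ! t)) = (\<Prod>t\<in>{1..<n}. Q (xs ! (t - 1)) (xs ! t))"
      using len by (intro prod.cong refl) (auto simp: nth_append)
    have e0: "(xs @ [x]) ! 0 = xs ! 0" using len step by (simp add: nth_append)
    have e1: "(xs @ [x]) ! (n - 1) = xs ! (n - 1)" "(xs @ [x]) ! n = x"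
      using len step by (auto simp: nth_append)
    have "(\<Prod>t\<in>{1..<Suc n}. Q ((xs @ [x]) ! (t - 1)) ((xs @ [x]) ! t)) =
          Q ((xs @ [x]) ! (n - 1)) ((xs @ [x]) ! n) * (\<Prod>t\<in>{1..<n}. Q ((xs @ [x]) ! (t - 1)) ((xs @ [x]) ! t))"
      unfolding ins by (subst prod.insert) auto
    then show "PX1 ((xs @ [x]) ! 0) * (\<Prod>t\<in>{1..<Suc n}. Q ((xs @ [x]) ! (t - 1)) ((xs @ [x]) ! t)) =
         PX1 (xs ! 0) * (\<Prod>t\<in>{1..<n}. Q (xs ! (t - 1)) (xs ! t)) * Q (xs ! (n - 1)) x"
      unfolding pr e0 e1 by simp
  qed
  also have "\<dots> = (\<Sum>xs\<in>LS mx n. PX1 (xs ! 0) * (\<Prod>t\<in>{1..<n}. Q (xs ! (t - 1)) (xs ! t)))"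
  proof (intro sum.cong refl)
    fix xs assume xs: "xs \<in> LS mx n"
    have "xs ! (n - 1) \<le> mx" using LS_nth[OF xs] step by auto
    then have "(\<Sum>x\<le>mx. Q (xs ! (n - 1)) x) = 1" using Q by (simp add: is_stochastic_def is_pmf_on_def)
    then show "(\<Sum>x\<le>mx. PX1 (xs ! 0) * (\<Prod>t\<in>{1..<n}. Q (xs ! (t - 1)) (xs ! t)) * Q (xs ! (n - 1)) x) =
      PX1 (xs ! 0) * (\<Prod>t\<in>{1..<n}. Q (xs ! (t - 1)) (xs ! t))"
      by (simp add: sum_distrib_left[symmetric])
  qed
  also have "\<dots> = 1" using step by simp
  finally show ?case .
qed

lemma sum_if_cond: "(\<Sum>y\<in>A. if P then f y else 0) = (if P then sum f A else (0::real))"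
  by (cases P) simp_all

lemma Omega_eq: "Omega mx my ms T = LS mx T \<times> ({..ms} \<times> LS my T)"
  by (auto simp: Omega_def LS_def)

lemma sum_Omega: "(\<Sum>\<omega>\<in>Omega mx my ms T. h \<omega>) =
   (\<Sum>xs\<in>LS mx T. \<Sum>s\<le>ms. \<Sum>ys\<in>LS my T. h (xs, s, ys))"
  unfolding Omega_eq by (simp add: sum.cartesian_product)


definition gX :: "(nat \<Rightarrow> nat \<Rightarrow> real) \<Rightarrow> (nat \<Rightarrow> real) \<Rightarrow> (nat \<Rightarrow> real) \<Rightarrow> nat \<Rightarrow> nat list \<Rightarrow> nat \<Rightarrow> real" where
  "gX Q PX1 PS1 T xs s1 = PS1 s1 * PX1 (xs ! 0) * (\<Prod>t\<in>{1..<T}. Q (xs ! (t - 1)) (xs ! t))"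

lemma joint_eq: "joint Q PX1 PS1 T K (xs, s1, ys) = gX Q PX1 PS1 T xs s1 * PK K xs s1 T ys"
  by (simp add: joint_def gX_def PK_def)

context
  fixes mx my ms T :: nat and K :: "nat \<Rightarrow> nat list \<Rightarrow> nat \<Rightarrow> nat \<Rightarrow> nat \<Rightarrow> real"
    and Q :: "nat \<Rightarrow> nat \<Rightarrow> real" and PX1 PS1 :: "nat \<Rightarrow> real"
  assumes pol: "is_decision_policy mx my ms T K"
    and T: "1 \<le> T" and Qs: "is_stochastic mx Q" and PX: "is_pmf_on mx PX1" and PS: "is_pmf_on ms PS1"
begin

lemma gX_nonneg: "xs \<in> LS mx T \<Longrightarrow> 0 \<le> gX Q PX1 PS1 T xs s1"
proof -
  assume xs: "xs \<in> LS mx T"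
  have "\<And>t. t \<in> {1..<T} \<Longrightarrow> 0 \<le> Q (xs ! (t - 1)) (xs ! t)"
  proof -
    fix t assume "t \<in> {1..<T}"
    then have "xs ! (t - 1) \<le> mx" using LS_nth[OF xs] by auto
    then show "0 \<le> Q (xs ! (t - 1)) (xs ! t)" using Qs by (simp add: is_stochastic_def is_pmf_on_def)
  qed
  then have "0 \<le> (\<Prod>t\<in>{1..<T}. Q (xs ! (t - 1)) (xs ! t))" by (rule prod_nonneg)
  moreover have "0 \<le> PS1 s1" "0 \<le> PX1 (xs ! 0)" using PX PS unfolding is_pmf_on_def by blast+
  ultimately show ?thesis unfolding gX_def by simp
qed

lemma p_nonneg: "\<omega> \<in> Omega mx my ms T \<Longrightarrow> 0 \<le> joint Q PX1 PS1 T K \<omega>"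
proof -
  assume w: "\<omega> \<in> Omega mx my ms T"
  obtain xs s1 ys where o: "\<omega> = (xs, s1, ys)" by (cases \<omega>) auto
  have xs: "xs \<in> LS mx T" and s1: "s1 \<le> ms" and ys: "ys \<in> LS my T"
    using w o by (auto simp: Omega_eq)
  have "0 \<le> PK K xs s1 T ys" using PK_prop[OF pol xs s1, of T ys] ys by (auto simp: LS_def)
  then show ?thesis using o joint_eq gX_nonneg[OF xs] by simp
qed

lemma pXS_eq: assumes xs: "xs \<in> LS mx T" and s1: "s1 \<le> ms"
  shows "(\<Sum>\<omega>'\<in>Omega mx my ms T. if fst \<omega>' = xs \<and> fst (snd \<omega>') = s1 then joint Q PX1 PS1 T K \<omega>' else 0)
     = gX Q PX1 PS1 T xs s1"
proof -
  have "(\<Sum>\<omega>'\<in>Omega mx my ms T. if fst \<omega>' = xs \<and> fst (snd \<omega>') = s1 then joint Q PX1 PS1 T K \<omega>' else 0)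
     = (\<Sum>xs'\<in>LS mx T. if xs' = xs then (\<Sum>s\<le>ms. if s = s1 then (\<Sum>ys\<in>LS my T. joint Q PX1 PS1 T K (xs', s, ys)) else 0) else 0)"
    unfolding sum_Omega
  proof (intro sum.cong refl)
    fix xs' show "(\<Sum>s\<le>ms. \<Sum>ys\<in>LS my T. if fst (xs', s, ys) = xs \<and> fst (snd (xs', s, ys)) = s1 then joint Q PX1 PS1 T K (xs', s, ys) else 0)
       = (if xs' = xs then (\<Sum>s\<le>ms. if s = s1 then (\<Sum>ys\<in>LS my T. joint Q PX1 PS1 T K (xs', s, ys)) else 0) else 0)"
      by (cases "xs' = xs") (simp_all add: sum_if_cond)
  qed
  also have "\<dots> = (\<Sum>ys\<in>LS my T. joint Q PX1 PS1 T K (xs, s1, ys))"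
    using xs s1 by (simp add: sum.delta)
  also have "\<dots> = gX Q PX1 PS1 T xs s1 * (\<Sum>ys\<in>LS my T. PK K xs s1 T ys)"
    by (simp add: joint_eq sum_distrib_left)
  also have "\<dots> = gX Q PX1 PS1 T xs s1" using PK_sum[OF pol xs s1, of T] by simp
  finally show ?thesis .
qed

lemma total: "(\<Sum>\<omega>\<in>Omega mx my ms T. joint Q PX1 PS1 T K \<omega>) = 1"
proof -
  have "(\<Sum>\<omega>\<in>Omega mx my ms T. joint Q PX1 PS1 T K \<omega>) =
     (\<Sum>xs\<in>LS mx T. \<Sum>s\<le>ms. gX Q PX1 PS1 T xs s * (\<Sum>ys\<in>LS my T. PK K xs s T ys))"
    unfolding sum_Omega by (simp add: joint_eq sum_distrib_left)
  also have "\<dots> = (\<Sum>xs\<in>LS mx T. \<Sum>s\<le>ms. gX Q PX1 PS1 T xs s)"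
    using PK_sum[OF pol, of _ _ T] by (intro sum.cong refl) simp
  also have "\<dots> = (\<Sum>xs\<in>LS mx T. (\<Sum>s\<le>ms. PS1 s) * (PX1 (xs ! 0) * (\<Prod>t\<in>{1..<T}. Q (xs ! (t - 1)) (xs ! t))))"
    unfolding gX_def by (simp add: sum_distrib_right mult_ac)
  also have "\<dots> = 1" using markov_sum[OF Qs PX T] PS by (simp add: is_pmf_on_def)
  finally show ?thesis .
qed


abbreviation "pp \<equiv> joint Q PX1 PS1 T K"
abbreviation "PY \<equiv> PY_prefix mx my ms Q PX1 PS1 T K"

lemma PY0: "PY 0 [] = 1"
  unfolding PY_prefix_def jointF_def using total by simp

lemma PY_ge: assumes w: "(xs, s1, ys) \<in> Omega mx my ms T"
  shows "pp (xs, s1, ys) \<le> PY t (take t ys)"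
proof -
  have "pp (xs, s1, ys) = (\<lambda>\<omega>. if take t (snd (snd \<omega>)) = take t ys then pp \<omega> else 0) (xs, s1, ys)" by simp
  also have "\<dots> \<le> (\<Sum>\<omega>\<in>Omega mx my ms T. if take t (snd (snd \<omega>)) = take t ys then pp \<omega> else 0)"
    by (rule member_le_sum[OF w]) (auto simp: p_nonneg Omega_eq)
  finally show ?thesis unfolding PY_prefix_def jointF_def .
qed

lemma pY_eq: assumes w: "(xs, s1, ys) \<in> Omega mx my ms T"
  shows "(\<Sum>\<omega>'\<in>Omega mx my ms T. if snd (snd \<omega>') = ys then pp \<omega>' else 0) = PY T ys"
proof -
  have "ys = take T ys" using w by (simp add: Omega_def)
  have "(\<Sum>\<omega>'\<in>Omega mx my ms T. if snd (snd \<omega>') = ys then pp \<omega>' else 0) =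
        (\<Sum>\<omega>'\<in>Omega mx my ms T. if take T (snd (snd \<omega>')) = take T ys then pp \<omega>' else 0)"
  proof (intro sum.cong refl)
    fix \<omega>' assume "\<omega>' \<in> Omega mx my ms T"
    then have "take T (snd (snd \<omega>')) = snd (snd \<omega>')" by (auto simp: Omega_def)
    then show "(if snd (snd \<omega>') = ys then pp \<omega>' else 0) =
        (if take T (snd (snd \<omega>')) = take T ys then pp \<omega>' else 0)"
      using \<open>ys = take T ys\<close> by simp
  qed
  then show ?thesis unfolding PY_prefix_def jointF_def using \<open>ys = take T ys\<close> by simp
qed

lemma main_point:
  assumes w: "(xs, s1, ys) \<in> Omega mx my ms T" and pos: "pp (xs, s1, ys) > 0"
  shows "(\<Sum>t<T. cost mx my ms Q PX1 PS1 T K t (xs, s1, ys)) =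
     ln (pp (xs, s1, ys) / (gX Q PX1 PS1 T xs s1 * PY T ys))"
proof -
  have xs: "xs \<in> LS mx T" and s1: "s1 \<le> ms" and ys: "ys \<in> LS my T"
    using w by (auto simp: Omega_eq)
  have lys: "length ys = T" "set ys \<subseteq> {..my}" using ys by (auto simp: LS_def)
  have peq: "pp (xs, s1, ys) = gX Q PX1 PS1 T xs s1 * PK K xs s1 T ys" by (rule joint_eq)
  have g0: "0 \<le> gX Q PX1 PS1 T xs s1" by (rule gX_nonneg[OF xs])
  have PK0: "0 \<le> PK K xs s1 T ys" using PK_prop[OF pol xs s1, of T ys] lys by auto
  have gpos: "gX Q PX1 PS1 T xs s1 > 0" and PKpos: "PK K xs s1 T ys > 0"
    using pos peq g0 PK0 by (auto simp: zero_less_mult_iff)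
  have st: "\<forall>t\<le>T. state s1 xs ys t \<le> ms" using PK_prop[OF pol xs s1, of T ys] lys PKpos by auto
  define k where "k t = K t (take t ys) (xs ! t) (state s1 xs ys t) (ys ! t)" for t
  have kpos: "k t > 0" if t: "t < T" for t
  proof -
    have "k t \<noteq> 0"
    proof
      assume "k t = 0"
      then have "PK K xs s1 T ys = 0" unfolding PK_def k_def[symmetric] using t
        by (intro prod_zero) auto
      then show False using PKpos by simp
    qed
    moreover have "in_A mx my ms (K t (take t ys))"
    proof -
      have "length (take t ys) = t" "set (take t ys) \<subseteq> {..my}"
        using t lys set_take_subset[of t ys] by auto
      then show ?thesis using pol t unfolding is_decision_policy_def by auto
    qed
    moreover have "xs ! t \<le> mx" using LS_nth[OF xs t] .
    moreover have "state s1 xs ys t \<le> ms" using st t by auto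
    ultimately have "k t \<noteq> 0" "0 \<le> k t" unfolding k_def in_A_def by blast+
    then show ?thesis by linarith
  qed
  define P where "P t = PY t (take t ys)" for t
  have Ppos: "P t > 0" for t using PY_ge[OF w, of t] pos unfolding P_def by linarith
  have "(\<Sum>t<T. cost mx my ms Q PX1 PS1 T K t (xs, s1, ys)) =
        (\<Sum>t<T. ln (k t) - (ln (P (Suc t)) - ln (P t)))"
  proof (intro sum.cong refl)
    fix t assume "t \<in> {..<T}"
    then have "k t > 0" using kpos by auto
    then show "cost mx my ms Q PX1 PS1 T K t (xs, s1, ys) = ln (k t) - (ln (P (Suc t)) - ln (P t))"
    proof -
      have c: "cost mx my ms Q PX1 PS1 T K t (xs, s1, ys) = ln (k t / (P (Suc t) / P t))"
        unfolding cost_def k_def P_def by simp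
      have "ln (k t / (P (Suc t) / P t)) = ln (k t) - ln (P (Suc t) / P t)"
        using \<open>k t > 0\<close> Ppos[of t] Ppos[of "Suc t"] by (intro ln_divide_pos) auto
      also have "ln (P (Suc t) / P t) = ln (P (Suc t)) - ln (P t)"
        using Ppos[of t] Ppos[of "Suc t"] by (intro ln_divide_pos) auto
      finally show ?thesis using c by simp
    qed
  qed
  also have "\<dots> = (\<Sum>t<T. ln (k t)) - (ln (P T) - ln (P 0))"
  proof -
    have "(\<Sum>t<T. ln (k t) - (ln (P (Suc t)) - ln (P t))) = (\<Sum>t<T. ln (k t)) - (\<Sum>t<T. ln (P (Suc t)) - ln (P t))"
      by (simp add: sum_subtractf)
    also have "(\<Sum>t<T. ln (P (Suc t)) - ln (P t)) = ln (P T) - ln (P 0)"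
      by (rule sum_lessThan_telescope)
    finally show ?thesis .
  qed
  also have "(\<Sum>t<T. ln (k t)) = ln (PK K xs s1 T ys)"
    unfolding PK_def k_def[symmetric] using kpos by (subst ln_prod) (auto, metis less_irrefl)
  also have "P 0 = 1" unfolding P_def using PY0 by simp
  also have "P T = PY T ys" unfolding P_def using lys by simp
  finally have L: "(\<Sum>t<T. cost mx my ms Q PX1 PS1 T K t (xs, s1, ys)) = ln (PK K xs s1 T ys) - ln (PY T ys)"
    by simp
  have "pp (xs, s1, ys) / (gX Q PX1 PS1 T xs s1 * PY T ys) = PK K xs s1 T ys / PY T ys"
    using peq gpos by simp
  then show ?thesis using L PKpos Ppos[of T] unfolding P_def using lys by (simp add: ln_div)
qed

lemma main_eq: "tilde_L_T mx my ms Q PX1 PS1 T K = (1 / real T) * mutual_info_XS_Y mx my ms T pp"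
  unfolding tilde_L_T_def mutual_info_XS_Y_def jointF_def
proof (intro arg_cong[where f="\<lambda>x. (1 / real T) * x"] sum.cong refl)
  fix \<omega> assume w: "\<omega> \<in> Omega mx my ms T"
  obtain xs s1 ys where o: "\<omega> = (xs, s1, ys)" by (cases \<omega>) auto
  have xs: "xs \<in> LS mx T" and s1: "s1 \<le> ms" using w o by (auto simp: Omega_eq)
  have nn: "0 \<le> pp \<omega>" using p_nonneg[OF w] .
  show "pp \<omega> * (\<Sum>t<T. cost mx my ms Q PX1 PS1 T K t \<omega>) =
    (let pXS = \<Sum>\<omega>'\<in>Omega mx my ms T. if fst \<omega>' = fst \<omega> \<and> fst (snd \<omega>') = fst (snd \<omega>) then pp \<omega>' else 0;
         pY = \<Sum>\<omega>'\<in>Omega mx my ms T. if snd (snd \<omega>') = snd (snd \<omega>) then pp \<omega>' else 0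
     in pp \<omega> * ln (pp \<omega> / (pXS * pY)))"
  proof (cases "pp \<omega> = 0")
    case True then show ?thesis by (simp add: Let_def)
  next
    case False
    then have pos: "pp (xs, s1, ys) > 0" using nn o by auto
    show ?thesis unfolding o Let_def
      using main_point[OF w[unfolded o] pos] pXS_eq[OF xs s1] pY_eq[OF w[unfolded o]] by simp
  qed
qed

end

theorem proposition2:
  fixes mx my ms T :: nat
    and Q :: "nat \<Rightarrow> nat \<Rightarrow> real" and PX1 PS1 :: "nat \<Rightarrow> real"
  assumes "mx \<le> my" and "1 \<le> T"
    and "is_stochastic mx Q" and "is_pmf_on mx PX1" and "is_pmf_on ms PS1"
  shows "(\<forall>q f. in_Q_B mx my ms T q \<longrightarrow> (\<forall>t ys. f t ys = (\<lambda>x s y. q t x s ys y)) \<longrightarrow>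
              is_decision_policy mx my ms T f \<and>
              tilde_L_T mx my ms Q PX1 PS1 T f = L_T mx my ms Q PX1 PS1 T q)
       \<and> (\<forall>f q. is_decision_policy mx my ms T f \<longrightarrow> (\<forall>t x s ys y. q t x s ys y = f t ys x s y) \<longrightarrow>
              in_Q_B mx my ms T q \<and>
              L_T mx my ms Q PX1 PS1 T q = tilde_L_T mx my ms Q PX1 PS1 T f)"
proof (intro conjI allI impI)
  fix q f
  assume qb: "in_Q_B mx my ms T q" and fq: "\<forall>t ys. f t ys = (\<lambda>x s y. q t x s ys y)"
  have feq: "f = (\<lambda>t ys x s y. q t x s ys y)" using fq by (intro ext) simp
  show pol: "is_decision_policy mx my ms T f"
    using qb unfolding feq in_Q_B_def is_decision_policy_def by simp
  have m: "tilde_L_T mx my ms Q PX1 PS1 T f = (1 / real T) * mutual_info_XS_Y mx my ms T (joint Q PX1 PS1 T f)"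
    by (rule main_eq[OF pol assms(2-5)])
  show "tilde_L_T mx my ms Q PX1 PS1 T f = L_T mx my ms Q PX1 PS1 T q"
    using m by (simp add: L_T_def jointQ_def feq)
next
  fix f q
  assume pol: "is_decision_policy mx my ms T f" and qf: "\<forall>t x s ys y. q t x s ys y = f t ys x s y"
  have feq: "(\<lambda>t ys x s y. q t x s ys y) = f" using qf by (intro ext) simp
  show "in_Q_B mx my ms T q"
  proof -
    have e: "\<And>t ys. (\<lambda>x s y. q t x s ys y) = f t ys" using qf by (intro ext) simp
    show ?thesis using pol unfolding in_Q_B_def is_decision_policy_def e by simp
  qed
  have m: "tilde_L_T mx my ms Q PX1 PS1 T f = (1 / real T) * mutual_info_XS_Y mx my ms T (joint Q PX1 PS1 T f)"
    by (rule main_eq[OF pol assms(2-5)])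
  show "L_T mx my ms Q PX1 PS1 T q = tilde_L_T mx my ms Q PX1 PS1 T f"
    using m by (simp add: L_T_def jointQ_def feq)
qed

end
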